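(* Assume Assumption (S). For $v$ defined on $\Omega$ with well-defined point values, let $P^*v\in\mathbb V^k$ be the piecewise interpolation polynomial with, on each $I_i$, $(P^*v)(x_{i,j})=v(x_{i,j})$ for $j=1,\dots,k$ and $(P^*v)(x_{i+\frac12}^-)=v(x_{i+\frac12}^-)$, and let $\eta^*=v-P^*v$. Then: (1) there is a constant $C$ independent of $v$ (and of the mesh) such that $\|\eta^*\|\le Ch^{k+1}\|\partial_x^{k+1}v\|_{L^\infty(\Omega)}$; (2) if $v$ is continuous, then $\mathcal H^*(\eta^*,\omega)=0$ for all $\omega\in\mathbb V^k$.
   Context: Let $\Omega=[a,b]$ be partitioned into finitely many cells $I_i=[x_{i-\frac12},x_{i+\frac12}]$ with sizes $h_i$, $h=\max_ih_i$, quasi-uniform ($h\le Ch_i$, fixed $C$); indices periodic. $\|\cdot\|$: $L^2(\Omega)$ norm; $(\cdot,\cdot)_{I_i}$: $L^2(I_i)$ inner product. $\mathbb V^k=\{v\in L^2(\Omega): v|_{I_i}\in\mathbb P^k(I_i)\ \forall i\}$. Each $I_i$ has subdivision points $x_{i-\frac12}=x_{i,0}<x_{i,1}<\dots<x_{i,k}<x_{i,k+1}=x_{i+\frac12}$. Quadrature on $I_i$: $Q_i^k(v)=\sum_{j=0}^{k+1}A_{i,j}v(x_{i,j})$ (applied to restrictions to $I_i$, endpoint values taken as limits from inside $I_i$), error $R_i^k(v)=\int_{I_i}v\,dx-Q_i^k(v)$, exact on $\mathbb P^{k-1}(I_i)$. $L_{i,\ell}$: shifted Legendre polynomial of degree $\ell$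 on $I_i$, $L_{i,\ell}(x_{i+\frac12})=1$, $(L_{i,\ell},L_{i,m})_{I_i}=\delta_{\ell m}h_i/(2\ell+1)$. Assumption (S): $k\ge1$ and for every $i$, $R_i^k$ vanishes on $\mathbb P^{2k-1}(I_i)$ and $\frac{h_i}{2k-1}-Q_i^k(L_{i,k+1}L_{i,k-1})>0$. Jumps $[\![v]\!]_{i+\frac12}=v(x_{i+\frac12}^+)-v(x_{i+\frac12}^-)$. For $\omega\in\mathbb V^k$ and piecewise smooth $v$: $\mathcal H^*(v,\omega)=\beta\big(\sum_iQ_i^k(v\omega_x)+\sum_iv(x_{i+\frac12}^-)[\![\omega]\!]_{i+\frac12}-\sum_iA_{i,0}\omega_x(x_{i-\frac12}^+)[\![v]\!]_{i-\frac12}\big)$, $\beta>0$ constant. *)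

theory Defs
  imports "HOL-Analysis.Analysis" "HOL-Computational_Algebra.Polynomial"
begin

text \<open>Cell indices are periodic modulo N.
  Piecewise functions are represented cellwise: f :: nat \<Rightarrow> real \<Rightarrow> real,
  where f i is the restriction of the function to the closed cell i
  (endpoint values = limits from inside the cell).\<close>

definition mesh_ok :: "real \<Rightarrow> real \<Rightarrow> nat \<Rightarrow> nat \<Rightarrow> (nat \<Rightarrow> real) \<Rightarrow> (nat \<Rightarrow> nat \<Rightarrow> real) \<Rightarrow> bool" where
  "mesh_ok a b k N p s \<longleftrightarrow> N \<ge> 1 \<and> p 0 = a \<and> p N = b \<and>
     (\<forall>i<N. p i < p (Suc i)) \<and>
     (\<forall>i<N. s i 0 = p i \<and> s i (k+1) = p (Suc i) \<and> (\<forall>j\<le>k. s i j < s i (Suc j)))"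

definition cell_size :: "(nat \<Rightarrow> real) \<Rightarrow> nat \<Rightarrow> real" where
  "cell_size p i = p (Suc i) - p i"

definition mesh_size :: "nat \<Rightarrow> (nat \<Rightarrow> real) \<Rightarrow> real" where
  "mesh_size N p = Max (cell_size p ` {..<N})"

definition quasi_uniform :: "real \<Rightarrow> nat \<Rightarrow> (nat \<Rightarrow> real) \<Rightarrow> bool" where
  "quasi_uniform Cq N p \<longleftrightarrow> (\<forall>i<N. mesh_size N p \<le> Cq * cell_size p i)"

definition quad :: "nat \<Rightarrow> (nat \<Rightarrow> nat \<Rightarrow> real) \<Rightarrow> (nat \<Rightarrow> nat \<Rightarrow> real) \<Rightarrow> nat \<Rightarrow> (real \<Rightarrow> real) \<Rightarrow> real" where
  "quad k s A i g = (\<Sum>j\<le>k+1. A i j * g (s i j))"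

text \<open>Shifted Legendre polynomial of degree l on [c,d] (Rodrigues formula):
  L(x) = 1/(l! (d-c)^l) * (d/dx)^l [((x-c)(x-d))^l];  L(d) = 1, norm^2 = (d-c)/(2l+1).\<close>
definition shifted_legendre :: "real \<Rightarrow> real \<Rightarrow> nat \<Rightarrow> real poly" where
  "shifted_legendre c d l =
     smult (1 / (fact l * (d - c) ^ l)) ((pderiv ^^ l) (([:-c, 1:] * [:-d, 1:]) ^ l))"

definition legendre_cell :: "(nat \<Rightarrow> real) \<Rightarrow> nat \<Rightarrow> nat \<Rightarrow> real poly" where
  "legendre_cell p i l = shifted_legendre (p i) (p (Suc i)) l"

definition assumption_S :: "nat \<Rightarrow> nat \<Rightarrow> (nat \<Rightarrow> real) \<Rightarrow> (nat \<Rightarrow> nat \<Rightarrow> real) \<Rightarrow> (nat \<Rightarrow> nat \<Rightarrow> real) \<Rightarrow> bool" where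
  "assumption_S k N p s A \<longleftrightarrow> k \<ge> 1 \<and>
     (\<forall>i<N. (\<forall>q :: real poly. degree q \<le> 2*k - 1 \<longrightarrow>
               integral {p i..p (Suc i)} (poly q) - quad k s A i (poly q) = 0) \<and>
            cell_size p i / (2*k - 1) -
              quad k s A i (poly (legendre_cell p i (k+1) * legendre_cell p i (k-1))) > 0)"

definition in_Vk :: "nat \<Rightarrow> nat \<Rightarrow> (nat \<Rightarrow> real poly) \<Rightarrow> bool" where
  "in_Vk k N w \<longleftrightarrow> (\<forall>i<N. degree (w i) \<le> k)"

text \<open>Interpolation P^* v on cell i: the polynomial of degree \<le> k agreeing with v at
  x_{i,1},...,x_{i,k} and at x_{i+1/2} (here v is continuous, so v(x_{i+1/2}^-) = v(x_{i+1/2})).\<close>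
definition Pstar :: "nat \<Rightarrow> (nat \<Rightarrow> nat \<Rightarrow> real) \<Rightarrow> (real \<Rightarrow> real) \<Rightarrow> nat \<Rightarrow> real poly" where
  "Pstar k s v i = (THE q. degree q \<le> k \<and> (\<forall>j\<in>{1..k+1}. poly q (s i j) = v (s i j)))"

definition eta_star :: "nat \<Rightarrow> (nat \<Rightarrow> nat \<Rightarrow> real) \<Rightarrow> (real \<Rightarrow> real) \<Rightarrow> nat \<Rightarrow> real \<Rightarrow> real" where
  "eta_star k s v i x = v x - poly (Pstar k s v i) x"

definition L2norm :: "nat \<Rightarrow> (nat \<Rightarrow> real) \<Rightarrow> (nat \<Rightarrow> real \<Rightarrow> real) \<Rightarrow> real" where
  "L2norm N p f = sqrt (\<Sum>i<N. integral {p i..p (Suc i)} (\<lambda>x. (f i x)\<^sup>2))"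

definition jump :: "nat \<Rightarrow> (nat \<Rightarrow> real) \<Rightarrow> (nat \<Rightarrow> real \<Rightarrow> real) \<Rightarrow> nat \<Rightarrow> real" where
  "jump N p f i = f ((i+1) mod N) (p ((i+1) mod N)) - f i (p (Suc i))"

text \<open>The bilinear form H^*(v, w); [v]_{i-1/2} is the jump at index (i+N-1) mod N.\<close>
definition Hstar :: "real \<Rightarrow> nat \<Rightarrow> nat \<Rightarrow> (nat \<Rightarrow> real) \<Rightarrow> (nat \<Rightarrow> nat \<Rightarrow> real) \<Rightarrow> (nat \<Rightarrow> nat \<Rightarrow> real)
     \<Rightarrow> (nat \<Rightarrow> real \<Rightarrow> real) \<Rightarrow> (nat \<Rightarrow> real poly) \<Rightarrow> real" where
  "Hstar \<beta> k N p s A v w = \<beta> *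
     ((\<Sum>i<N. quad k s A i (\<lambda>x. v i x * poly (pderiv (w i)) x))
      + (\<Sum>i<N. v i (p (Suc i)) * jump N p (\<lambda>i. poly (w i)) i)
      - (\<Sum>i<N. A i 0 * poly (pderiv (w i)) (p i) * jump N p v ((i + N - 1) mod N)))"

end

theory Submission
  imports Defs
begin


lemma rolle_step:
  fixes f f' :: "real \<Rightarrow> real"
  assumes der: "\<And>x. x \<in> {c..d} \<Longrightarrow> (f has_real_derivative f' x) (at x within {c..d})"
    and uw: "u < w" "c \<le> u" "w \<le> d" and fu: "f u = 0" and fw: "f w = 0"
  shows "\<exists>y. u < y \<and> y < w \<and> f' y = 0"
proof -
  have cont: "continuous_on {u..w} f"
    by (rule DERIV_continuous_on[of _ _ f']) (rule has_field_derivative_subset[OF der], use uw in auto)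
  have "\<exists>z. u < z \<and> z < w \<and> (\<lambda>v. f' z * v) = (\<lambda>v. 0)"
  proof (rule Rolle_deriv[OF uw(1)])
    show "f u = f w" using fu fw by simp
    show "continuous_on {u..w} f" by (rule cont)
    fix x assume x: "u < x" "x < w"
    have "x \<in> interior {c..d}" using x uw by auto
    then have "at x within {c..d} = at x" by (rule at_within_interior)
    then have "(f has_real_derivative f' x) (at x)" using der[of x] x uw by auto
    then show "(f has_derivative (\<lambda>v. f' x * v)) (at x)"
      by (simp add: has_field_derivative_def)
  qed
  then obtain z where "u < z" "z < w" "(\<lambda>v. f' z * v) = (\<lambda>v. 0)" by blast
  moreover from this(3) have "f' z = 0" by (metis mult.right_neutral)
  ultimately show ?thesis by blast
qed

lemma rolle_set:
  fixes f f' :: "real \<Rightarrow> real"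
  assumes der: "\<And>x. x \<in> {c..d} \<Longrightarrow> (f has_real_derivative f' x) (at x within {c..d})"
  shows "finite Z \<Longrightarrow> card Z = Suc n \<Longrightarrow> Z \<subseteq> {c..d} \<Longrightarrow> (\<forall>z\<in>Z. f z = 0) \<Longrightarrow>
     \<exists>Y. finite Y \<and> card Y = n \<and> Y \<subseteq> {c..<Max Z} \<and> (\<forall>y\<in>Y. f' y = 0)"
proof (induction n arbitrary: Z)
  case 0
  then show ?case by (intro exI[of _ "{}"]) auto
next
  case (Suc n)
  define m where "m = Max Z"
  define Z' where "Z' = Z - {m}"
  have ne: "Z \<noteq> {}" using Suc.prems by auto
  have mZ: "m \<in> Z" using Suc.prems(1) ne by (simp add: m_def)
  have cZ': "card Z' = Suc n" using Suc.prems(2) mZ Suc.prems(1) by (simp add: Z'_def)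
  have fZ': "finite Z'" using Suc.prems(1) by (simp add: Z'_def)
  have neZ': "Z' \<noteq> {}" using cZ' by auto
  obtain Y' where Y': "finite Y'" "card Y' = n" "Y' \<subseteq> {c..<Max Z'}" "\<forall>y\<in>Y'. f' y = 0"
    using Suc.IH[OF fZ' cZ'] Suc.prems by (auto simp: Z'_def)
  have m'Z': "Max Z' \<in> Z'" using fZ' neZ' by simp
  have lt: "Max Z' < m"
  proof -
    have "Max Z' \<le> m" using m'Z' Suc.prems(1) by (auto simp: Z'_def m_def)
    moreover have "Max Z' \<noteq> m" using m'Z' by (auto simp: Z'_def)
    ultimately show ?thesis by simp
  qed
  have in1: "Max Z' \<in> {c..d}" "m \<in> {c..d}" using m'Z' mZ Suc.prems(3) by (auto simp: Z'_def)
  obtain y where y: "Max Z' < y" "y < m" "f' y = 0"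
    using rolle_step[OF der lt] in1 m'Z' mZ Suc.prems(4) by (auto simp: Z'_def)
  have yn: "y \<notin> Y'" using Y'(3) y by auto
  show ?case
  proof (intro exI[of _ "insert y Y'"] conjI)
    show "card (insert y Y') = Suc n" using Y' yn by simp
    show "insert y Y' \<subseteq> {c..<Max Z}" using Y'(3) y in1 lt by (auto simp: m_def)
  qed (use Y' y in auto)
qed

lemma rolle_iter:
  fixes D :: "nat \<Rightarrow> real \<Rightarrow> real"
  shows "(\<forall>m<n. \<forall>x\<in>{c..d}. (D m has_real_derivative D (Suc m) x) (at x within {c..d})) \<Longrightarrow>
     finite Z \<Longrightarrow> card Z = Suc n \<Longrightarrow> Z \<subseteq> {c..d} \<Longrightarrow> (\<forall>z\<in>Z. D 0 z = 0) \<Longrightarrow>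
     \<exists>\<xi>\<in>{c..d}. D n \<xi> = 0"
proof (induction n arbitrary: D Z)
  case 0
  then obtain z where "z \<in> Z" by fastforce
  then show ?case using 0 by auto
next
  case (Suc n)
  obtain Y where Y: "finite Y" "card Y = Suc n" "Y \<subseteq> {c..<Max Z}" "\<forall>y\<in>Y. D 1 y = 0"
    using rolle_set[of c d "D 0" "D 1" Z "Suc n"] Suc.prems by auto
  have "Max Z \<le> d" using Suc.prems by (metis Max_in atLeastAtMost_iff card.empty nat.simps(3) subsetD)
  then have "Y \<subseteq> {c..d}" using Y(3) by auto
  then show ?case using Suc.IH[of "\<lambda>m. D (Suc m)" Y] Suc.prems Y by auto
qed



lemma pderiv_funpow_deg:
  fixes p :: "real poly"
  shows "degree p \<le> n \<Longrightarrow> (pderiv ^^ n) p = [:fact n * coeff p n:]"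
proof (induction n arbitrary: p)
  case 0
  then show ?case by (auto intro!: poly_eqI simp: coeff_eq_0 coeff_pCons split: nat.split)
next
  case (Suc n)
  have "degree (pderiv p) \<le> n" using Suc.prems by (simp add: degree_pderiv)
  then have "(pderiv ^^ n) (pderiv p) = [:fact n * coeff (pderiv p) n:]" by (rule Suc.IH)
  then show ?case by (simp add: funpow_Suc_right coeff_pderiv del: funpow.simps)
qed

lemma interp_exists:
  fixes X :: "real set" and f :: "real \<Rightarrow> real"
  assumes "finite X" "card X = Suc k"
  shows "\<exists>q. degree q \<le> k \<and> (\<forall>x\<in>X. poly q x = f x)"
proof -
  define q where "q = (\<Sum>x\<in>X. smult (f x / (\<Prod>y\<in>X-{x}. (x - y))) (\<Prod>y\<in>X-{x}. [:-y,1:]))"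
  have "degree q \<le> k"
    unfolding q_def
  proof (rule degree_sum_le[OF assms(1)])
    fix x assume x: "x \<in> X"
    have "degree (\<Prod>y\<in>X-{x}. [:-y,1:]) \<le> (\<Sum>y\<in>X-{x}. degree [:-y,1::real:])"
      using degree_prod_sum_le[of "X-{x}" "\<lambda>y. [:-y,1::real:]"] assms(1) by (simp add: o_def)
    also have "\<dots> = k" using assms x by simp
    finally show "degree (smult (f x / (\<Prod>y\<in>X-{x}. (x - y))) (\<Prod>y\<in>X-{x}. [:-y,1:])) \<le> k"
      by (meson degree_smult_le order_trans)
  qed
  moreover have "poly q z = f z" if z: "z \<in> X" for z
  proof -
    have "poly q z = (\<Sum>x\<in>X. f x / (\<Prod>y\<in>X-{x}. (x - y)) * (\<Prod>y\<in>X-{x}. (z - y)))"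
      by (simp add: q_def poly_sum poly_prod)
    also have "\<dots> = f z / (\<Prod>y\<in>X-{z}. (z - y)) * (\<Prod>y\<in>X-{z}. (z - y))"
    proof -
      have "(\<Sum>x\<in>X-{z}. f x / (\<Prod>y\<in>X-{x}. (x - y)) * (\<Prod>y\<in>X-{x}. (z - y))) = 0"
      proof (rule sum.neutral, rule ballI)
        fix x assume "x \<in> X - {z}"
        then have "(\<Prod>y\<in>X-{x}. (z - y)) = 0" using z assms(1)
          by (intro prod_zero) auto
        then show "f x / (\<Prod>y\<in>X-{x}. (x - y)) * (\<Prod>y\<in>X-{x}. (z - y)) = 0" by simp
      qed
      then show ?thesis by (simp add: sum.remove[OF assms(1) z])
    qed
    also have "\<dots> = f z"
    proof -
      have "(\<Prod>y\<in>X-{z}. (z - y)) \<noteq> 0" using assms(1) by (simp)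
      then show ?thesis by simp
    qed
    finally show ?thesis .
  qed
  ultimately show ?thesis by blast
qed



lemma s_strict:
  assumes "\<forall>j\<le>k. s i j < s i (Suc j)"
  shows "j < l \<Longrightarrow> l \<le> k+1 \<Longrightarrow> (s i j :: real) < s i l"
proof (induction l)
  case 0 then show ?case by simp
next
  case (Suc l)
  show ?case
  proof (cases "j = l")
    case True then show ?thesis using assms Suc.prems by auto
  next
    case False
    then have "s i j < s i l" using Suc by auto
    also have "\<dots> < s i (Suc l)" using assms Suc.prems by auto
    finally show ?thesis .
  qed
qed

lemma p_mono:
  assumes "\<forall>i<N. (p::nat\<Rightarrow>real) i < p (Suc i)"
  shows "i \<le> j \<Longrightarrow> j \<le> N \<Longrightarrow> p i \<le> p j"
proof (induction j)
  case 0 then show ?case by simp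
next
  case (Suc j)
  show ?case
  proof (cases "i = Suc j")
    case False
    then have "p i \<le> p j" using Suc by auto
    also have "p j \<le> p (Suc j)" using assms Suc.prems by (simp add: less_imp_le)
    finally show ?thesis .
  qed simp
qed

lemma mesh_facts:
  assumes m: "mesh_ok a b k N p s" and i: "i < N"
  shows "p i < p (Suc i)" "a \<le> p i" "p (Suc i) \<le> b"
    "\<And>j. j \<le> k+1 \<Longrightarrow> s i j \<in> {p i..p (Suc i)}"
    "\<And>j l. j < l \<Longrightarrow> l \<le> k+1 \<Longrightarrow> s i j < s i l"
    "card (s i ` {1..k+1}) = Suc k" "finite (s i ` {1..k+1})"
    "s i ` {1..k+1} \<subseteq> {p i..p (Suc i)}"
    "s i (k+1) = p (Suc i)"
proof -
  have pm: "\<forall>i<N. p i < p (Suc i)" and ss: "\<forall>j\<le>k. s i j < s i (Suc j)"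
    and s0: "s i 0 = p i" and sk: "s i (k+1) = p (Suc i)" and pa: "p 0 = a" and pb: "p N = b"
    using m i unfolding mesh_ok_def by auto
  show "p i < p (Suc i)" using pm i by auto
  show "a \<le> p i" using p_mono[OF pm, of 0 i] i pa by auto
  show "p (Suc i) \<le> b" using p_mono[OF pm, of "Suc i" N] i pb by auto
  show lt: "\<And>j l. j < l \<Longrightarrow> l \<le> k+1 \<Longrightarrow> s i j < s i l" using s_strict[of k s i, OF ss] by blast
  show inc: "\<And>j. j \<le> k+1 \<Longrightarrow> s i j \<in> {p i..p (Suc i)}"
  proof -
    fix j assume j: "j \<le> k+1"
    have "p i \<le> s i j" using lt[of 0 j] j s0 by (cases "j = 0") auto
    moreover have "s i j \<le> p (Suc i)" using lt[of j "k+1"] j sk by (cases "j = k+1") auto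
    ultimately show "s i j \<in> {p i..p (Suc i)}" by simp
  qed
  have "inj_on (s i) {1..k+1}"
  proof (rule inj_onI)
    fix x y assume "x \<in> {1..k+1}" "y \<in> {1..k+1}" "s i x = s i y"
    then show "x = y" using lt[of x y] lt[of y x] by (cases x y rule: linorder_cases) auto
  qed
  then show "card (s i ` {1..k+1}) = Suc k" by (simp add: card_image)
  show "finite (s i ` {1..k+1})" by simp
  show "s i ` {1..k+1} \<subseteq> {p i..p (Suc i)}" using inc by auto
  show "s i (k+1) = p (Suc i)" by (rule sk)
qed

lemma Pstar_prop:
  assumes m: "mesh_ok a b k N p s" and i: "i < N"
  shows "degree (Pstar k s v i) \<le> k \<and> (\<forall>j\<in>{1..k+1}. poly (Pstar k s v i) (s i j) = v (s i j))"
proof -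
  let ?X = "s i ` {1..k+1}"
  note mf = mesh_facts[OF m i]
  obtain q where q: "degree q \<le> k" "\<forall>x\<in>?X. poly q x = v x"
    using interp_exists[OF mf(7) mf(6), of v] by blast
  have ex1: "\<exists>!q. degree q \<le> k \<and> (\<forall>j\<in>{1..k+1}. poly q (s i j) = v (s i j))"
  proof (rule ex1I[of _ q])
    show "degree q \<le> k \<and> (\<forall>j\<in>{1..k+1}. poly q (s i j) = v (s i j))" using q by auto
    fix r assume r: "degree r \<le> k \<and> (\<forall>j\<in>{1..k+1}. poly r (s i j) = v (s i j))"
    show "r = q"
      by (rule poly_eqI_degree[of ?X]) (use r q mf(6) in auto)
  qed
  show ?thesis unfolding Pstar_def by (rule theI'[OF ex1])
qed

lemma eta_nodes:
  assumes m: "mesh_ok a b k N p s" and i: "i < N" and j: "j \<in> {1..k+1}"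
  shows "eta_star k s v i (s i j) = 0"
  using Pstar_prop[OF m i, of v] j by (auto simp: eta_star_def)

lemma eta_right:
  assumes m: "mesh_ok a b k N p s" and i: "i < N" and k: "k \<ge> 1"
  shows "eta_star k s v i (p (Suc i)) = 0"
  using eta_nodes[OF m i, of "k+1" v] mesh_facts(9)[OF m i] by auto

lemma mod_prev:
  assumes "(i::nat) < N"
  shows "(i + N - 1) mod N < N" "((i + N - 1) mod N + 1) mod N = i"
proof -
  show "(i + N - 1) mod N < N" using assms by simp
  show "((i + N - 1) mod N + 1) mod N = i"
  proof (cases i)
    case 0
    then show ?thesis using assms by (cases N) auto
  next
    case (Suc i')
    then have "i + N - 1 = i' + N" by simp
    then show ?thesis using assms Suc by (simp add: mod_Suc_eq)
  qed
qed

lemma part2: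
  assumes m: "mesh_ok a b k N p s" and S: "assumption_S k N p s A"
  shows "Hstar \<beta> k N p s A (eta_star k s v) w = 0"
proof -
  have k: "k \<ge> 1" using S by (simp add: assumption_S_def)
  let ?e = "eta_star k s v"
  have s1: "(\<Sum>i<N. quad k s A i (\<lambda>x. ?e i x * poly (pderiv (w i)) x))
      = (\<Sum>i<N. A i 0 * poly (pderiv (w i)) (p i) * ?e i (p i))"
  proof (rule sum.cong[OF refl])
    fix i assume i: "i \<in> {..<N}"
    have s0: "s i 0 = p i" using m i by (simp add: mesh_ok_def)
    have "(\<Sum>j\<le>k. A i (Suc j) * (?e i (s i (Suc j)) * poly (pderiv (w i)) (s i (Suc j)))) = 0"
      using eta_nodes[OF m] i by (intro sum.neutral) auto
    then show "quad k s A i (\<lambda>x. ?e i x * poly (pderiv (w i)) x) = A i 0 * poly (pderiv (w i)) (p i) * ?e i (p i)"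
      unfolding quad_def by (simp add: sum.atMost_Suc_shift s0 del: sum.atMost_Suc)
  qed
  have s2: "(\<Sum>i<N. ?e i (p (Suc i)) * jump N p (\<lambda>i. poly (w i)) i) = 0"
    using eta_right[OF m _ k] by (intro sum.neutral) auto
  have s3: "(\<Sum>i<N. A i 0 * poly (pderiv (w i)) (p i) * jump N p ?e ((i + N - 1) mod N))
     = (\<Sum>i<N. A i 0 * poly (pderiv (w i)) (p i) * ?e i (p i))"
  proof (rule sum.cong[OF refl])
    fix i assume i: "i \<in> {..<N}"
    then have "jump N p ?e ((i + N - 1) mod N) = ?e i (p i)"
      unfolding jump_def using mod_prev[of i N] eta_right[OF m _ k] by auto
    then show "A i 0 * poly (pderiv (w i)) (p i) * jump N p ?e ((i + N - 1) mod N) = A i 0 * poly (pderiv (w i)) (p i) * ?e i (p i)"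
      by simp
  qed
  show ?thesis unfolding Hstar_def s1 s2 s3 by simp
qed



lemma pointwise:
  assumes m: "mesh_ok a b k N p s" and i: "i < N"
    and Dv: "\<forall>x\<in>{a..b}. D 0 x = v x"
    and Dd: "\<forall>m\<le>k. \<forall>x\<in>{a..b}. (D m has_real_derivative D (Suc m) x) (at x within {a..b})"
    and DM: "\<forall>x\<in>{a..b}. \<bar>D (k+1) x\<bar> \<le> M"
    and x: "x \<in> {p i..p (Suc i)}"
  shows "\<bar>eta_star k s v i x\<bar> \<le> M * cell_size p i ^ (k+1)"
proof -
  note mf = mesh_facts[OF m i]
  define c where "c = p i"
  define d where "d = p (Suc i)"
  define X where "X = s i ` {1..k+1}"
  define P where "P = Pstar k s v i"
  define Wp where "Wp = (\<Prod>y\<in>X. [:-y,1::real:])"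
  have cd: "{c..d} \<subseteq> {a..b}" using mf by (auto simp: c_def d_def)
  have xab: "x \<in> {a..b}" using x cd by (auto simp: c_def d_def)
  have M0: "0 \<le> M" using DM xab by (meson abs_ge_zero order_trans)
  have h0: "0 \<le> cell_size p i" using mf by (simp add: cell_size_def)
  have XC: "X \<subseteq> {c..d}" "finite X" "card X = Suc k" using mf by (auto simp: X_def c_def d_def)
  have Pp: "degree P \<le> k" "\<forall>y\<in>X. poly P y = v y"
    using Pstar_prop[OF m i, of v] by (auto simp: P_def X_def)
  have eta: "eta_star k s v i x = v x - poly P x" by (simp add: eta_star_def P_def)
  show ?thesis
  proof (cases "x \<in> X")
    case True
    then have "eta_star k s v i x = 0" using Pp eta by simp
    then show ?thesis using M0 h0 by simp
  next
    case False
    have Wx: "poly Wp x = (\<Prod>y\<in>X. x - y)" by (simp add: Wp_def poly_prod)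
    have W0: "poly Wp x \<noteq> 0" using False XC(2) unfolding Wx by auto
    define cc where "cc = eta_star k s v i x / poly Wp x"
    define G where "G = (\<lambda>m t. D m t - poly ((pderiv ^^ m) P) t - cc * poly ((pderiv ^^ m) Wp) t)"
    have Gd: "\<forall>m<k+1. \<forall>t\<in>{c..d}. (G m has_real_derivative G (Suc m) t) (at t within {c..d})"
    proof (intro allI impI ballI)
      fix m t assume mk: "m < k+1" and t: "t \<in> {c..d}"
      have d1: "(D m has_real_derivative D (Suc m) t) (at t within {c..d})"
      proof -
        have "(D m has_real_derivative D (Suc m) t) (at t within {a..b})" using Dd mk t cd by auto
        then show ?thesis by (rule has_field_derivative_subset[OF _ cd])
      qed
      have d2: "((\<lambda>t. poly ((pderiv ^^ m) P) t) has_real_derivative poly ((pderiv ^^ Suc m) P) t) (at t within {c..d})"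
        by (simp add: has_field_derivative_at_within)
      have d3: "((\<lambda>t. poly ((pderiv ^^ m) Wp) t) has_real_derivative poly ((pderiv ^^ Suc m) Wp) t) (at t within {c..d})"
        by (simp add: has_field_derivative_at_within)
      show "(G m has_real_derivative G (Suc m) t) (at t within {c..d})"
        unfolding G_def by (intro DERIV_diff DERIV_cmult d1 d2 d3)
    qed
    have Z: "finite (insert x X)" "card (insert x X) = Suc (k+1)" "insert x X \<subseteq> {c..d}"
      using XC False x by (auto simp: c_def d_def)
    have GZ: "\<forall>z\<in>insert x X. G 0 z = 0"
    proof
      fix z assume z: "z \<in> insert x X"
      show "G 0 z = 0"
      proof (cases "z = x")
        case True
        then show ?thesis using Dv xab W0 eta by (simp add: G_def cc_def)
      next
        case False
        then have zX: "z \<in> X" using z by simp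
        then have "z \<in> {a..b}" using XC cd by auto
        moreover have "poly Wp z = 0" using zX XC(2) by (simp add: Wp_def poly_prod)
        ultimately show ?thesis using Dv Pp zX by (simp add: G_def)
      qed
    qed
    obtain \<xi> where \<xi>: "\<xi> \<in> {c..d}" "G (k+1) \<xi> = 0"
      using rolle_iter[OF Gd Z GZ] by blast
    have P0: "(pderiv ^^ (k+1)) P = 0"
      using pderiv_funpow_deg[of P "k+1"] Pp by (simp add: coeff_eq_0)
    have degW: "degree Wp = k+1"
      unfolding Wp_def using degree_prod_eq_sum_degree[of X "\<lambda>y. [:-y,1::real:]"] XC by simp
    have lcW: "lead_coeff Wp = 1" unfolding Wp_def lead_coeff_prod by simp
    have WW: "(pderiv ^^ (k+1)) Wp = [:fact (k+1):]"
      using pderiv_funpow_deg[of Wp "k+1"] degW lcW by simp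
    have key: "D (k+1) \<xi> = cc * fact (k+1)"
      using \<xi>(2) P0 WW by (simp add: G_def)
    have e: "eta_star k s v i x = cc * poly Wp x" using W0 by (simp add: cc_def)
    have Wb: "\<bar>poly Wp x\<bar> \<le> cell_size p i ^ (k+1)"
    proof -
      have "\<bar>poly Wp x\<bar> = (\<Prod>y\<in>X. \<bar>x - y\<bar>)" unfolding Wx by (simp add: abs_prod)
      also have "\<dots> \<le> (\<Prod>y\<in>X. cell_size p i)"
        using XC x by (intro prod_mono) (force simp: cell_size_def c_def d_def abs_le_iff subset_iff)
      also have "\<dots> = cell_size p i ^ (k+1)" using XC by simp
      finally show ?thesis .
    qed
    have ccb: "\<bar>cc\<bar> \<le> M"
    proof -
      have "\<xi> \<in> {a..b}" using \<xi>(1) cd by auto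
      then have "\<bar>D (k+1) \<xi>\<bar> \<le> M" using DM by blast
      then have "\<bar>cc * fact (k+1)\<bar> \<le> M" unfolding key .
      then have "\<bar>cc\<bar> * fact (k+1) \<le> M" by (simp add: abs_mult del: fact_Suc)
      moreover have "(1::real) \<le> fact (k+1)" by (rule fact_ge_1)
      ultimately show ?thesis using M0
        by (smt (verit, best) abs_ge_zero mult_le_cancel_left1)
    qed
    have "\<bar>eta_star k s v i x\<bar> = \<bar>cc\<bar> * \<bar>poly Wp x\<bar>" by (simp add: e abs_mult)
    also have "\<dots> \<le> M * cell_size p i ^ (k+1)"
      by (intro mult_mono ccb Wb M0) simp
    finally show ?thesis .
  qed
qed



lemma part1:
  assumes ab: "a < b" and m: "mesh_ok a b k N p s"
    and Dv: "\<forall>x\<in>{a..b}. D 0 x = v x"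
    and Dd: "\<forall>m\<le>k. \<forall>x\<in>{a..b}. (D m has_real_derivative D (Suc m) x) (at x within {a..b})"
    and DM: "\<forall>x\<in>{a..b}. \<bar>D (k+1) x\<bar> \<le> M"
  shows "L2norm N p (eta_star k s v) \<le> sqrt (b - a) * mesh_size N p ^ (k+1) * M"
proof -
  define h where "h = mesh_size N p"
  define B where "B = M * h ^ (k+1)"
  have M0: "0 \<le> M" using DM ab by (meson abs_ge_zero atLeastAtMost_iff less_imp_le order_refl order_trans)
  have hi: "cell_size p i \<le> h" if "i < N" for i
    unfolding h_def mesh_size_def using that by (intro Max_ge) auto
  have hi0: "0 \<le> cell_size p i" if "i < N" for i
    using mesh_facts(1)[OF m that] by (simp add: cell_size_def)
  have N1: "N \<ge> 1" using m by (simp add: mesh_ok_def)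
  have h0: "0 \<le> h" using hi0[of 0] hi[of 0] N1 by simp
  have B0: "0 \<le> B" using M0 h0 by (simp add: B_def)
  have contv: "continuous_on {a..b} v"
  proof -
    have "continuous_on {a..b} (D 0)"
      by (rule DERIV_continuous_on[of _ _ "D 1"]) (use Dd in auto)
    then show ?thesis using Dv continuous_on_cong by fastforce
  qed
  have cell: "integral {p i..p (Suc i)} (\<lambda>x. (eta_star k s v i x)\<^sup>2) \<le> cell_size p i * B\<^sup>2"
    if i: "i < N" for i
  proof -
    note mf = mesh_facts[OF m i]
    have sub: "{p i..p (Suc i)} \<subseteq> {a..b}" using mf by auto
    have "continuous_on {p i..p (Suc i)} (\<lambda>x. (eta_star k s v i x)\<^sup>2)"
      unfolding eta_star_def
      by (intro continuous_intros continuous_on_subset[OF contv sub])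
    then have int: "(\<lambda>x. (eta_star k s v i x)\<^sup>2) integrable_on {p i..p (Suc i)}"
      by (rule integrable_continuous_interval)
    have le: "(eta_star k s v i x)\<^sup>2 \<le> B\<^sup>2" if x: "x \<in> {p i..p (Suc i)}" for x
    proof -
      have "\<bar>eta_star k s v i x\<bar> \<le> M * cell_size p i ^ (k+1)"
        by (rule pointwise[OF m i Dv Dd DM x])
      also have "\<dots> \<le> B" unfolding B_def
        by (intro mult_left_mono power_mono hi hi0 i M0)
      finally have "\<bar>eta_star k s v i x\<bar> \<le> B" .
      then have "\<bar>eta_star k s v i x\<bar>\<^sup>2 \<le> B\<^sup>2" by (intro power_mono) auto
      then show ?thesis by simp
    qed
    have "integral {p i..p (Suc i)} (\<lambda>x. (eta_star k s v i x)\<^sup>2) \<le> integral {p i..p (Suc i)} (\<lambda>x. B\<^sup>2)"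
      by (rule integral_le[OF int]) (use le in auto)
    also have "\<dots> = cell_size p i * B\<^sup>2" using mf(1) by (simp add: cell_size_def)
    finally show ?thesis .
  qed
  have "(\<Sum>i<N. integral {p i..p (Suc i)} (\<lambda>x. (eta_star k s v i x)\<^sup>2)) \<le> (\<Sum>i<N. cell_size p i * B\<^sup>2)"
    by (intro sum_mono cell) auto
  also have "\<dots> = (b - a) * B\<^sup>2"
  proof -
    have "(\<Sum>i<N. cell_size p i) = p N - p 0" unfolding cell_size_def by (rule sum_lessThan_telescope)
    then show ?thesis using m by (simp add: sum_distrib_right[symmetric] mesh_ok_def)
  qed
  finally have "L2norm N p (eta_star k s v) \<le> sqrt ((b - a) * B\<^sup>2)"
    unfolding L2norm_def by (rule real_sqrt_le_mono)
  also have "\<dots> = sqrt (b - a) * B" using B0 by (simp add: real_sqrt_mult)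
  finally show ?thesis by (simp add: B_def h_def mult.assoc mult.commute mult.left_commute)
qed


theorem proposition4p19:
  fixes a b Cq :: real and k :: nat
  assumes "a < b"
  shows
   "(\<exists>C. \<forall>N p s A v D M.
        mesh_ok a b k N p s \<and> quasi_uniform Cq N p \<and> assumption_S k N p s A \<and>
        (\<forall>x\<in>{a..b}. D 0 x = v x) \<and>
        (\<forall>m\<le>k. \<forall>x\<in>{a..b}. (D m has_real_derivative D (Suc m) x) (at x within {a..b})) \<and>
        (\<forall>x\<in>{a..b}. \<bar>D (k+1) x\<bar> \<le> M)
        \<longrightarrow> L2norm N p (eta_star k s v) \<le> C * mesh_size N p ^ (k+1) * M)
    \<and> (\<forall>N p s A v w \<beta>.
        mesh_ok a b k N p s \<and> quasi_uniform Cq N p \<and> assumption_S k N p s A \<and>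
        continuous_on {a..b} v \<and> in_Vk k N w \<and> \<beta> > 0
        \<longrightarrow> Hstar \<beta> k N p s A (eta_star k s v) w = 0)"
  proof (intro conjI)
  show "\<exists>C. \<forall>N p s A v D M.
        mesh_ok a b k N p s \<and> quasi_uniform Cq N p \<and> assumption_S k N p s A \<and>
        (\<forall>x\<in>{a..b}. D 0 x = v x) \<and>
        (\<forall>m\<le>k. \<forall>x\<in>{a..b}. (D m has_real_derivative D (Suc m) x) (at x within {a..b})) \<and>
        (\<forall>x\<in>{a..b}. \<bar>D (k+1) x\<bar> \<le> M)
        \<longrightarrow> L2norm N p (eta_star k s v) \<le> C * mesh_size N p ^ (k+1) * M"
    by (rule exI[of _ "sqrt (b - a)"]) (use part1[OF assms] in blast)
  show "\<forall>N p s A v w \<beta>.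
        mesh_ok a b k N p s \<and> quasi_uniform Cq N p \<and> assumption_S k N p s A \<and>
        continuous_on {a..b} v \<and> in_Vk k N w \<and> \<beta> > 0
        \<longrightarrow> Hstar \<beta> k N p s A (eta_star k s v) w = 0"
    using part2 by blast
qed

end
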